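(* Let $\Omega\subset\mathbb{C}^d$ be a complete Kobayashi hyperbolic domain and let $\gamma:[0,\infty)\to\Omega$ be a geodesic ray. Suppose $x,y\in\partial\Omega$ and there are sequences $t_n\to\infty$, $s_n\to\infty$ with $\gamma(t_n)\to x$ and $\gamma(s_n)\to y$. Then for every $R>0$ and every $o\in\Omega$, $y\in\overline{H^b_o(x,R)}$. In particular, $x\in\overline{H^b_o(x,R)}$ for all $R>0$, $o\in\Omega$.
   Context: For a Kobayashi hyperbolic domain $\Omega\subset\mathbb{C}^d$ with Kobayashi distance $\mathsf{k}_\Omega$, $x\in\partial\Omega$, $o\in\Omega$, $R>0$: $H^b_o(x,R)=\{z\in\Omega:\liminf_{w\to x}(\mathsf{k}_\Omega(z,w)-\mathsf{k}_\Omega(o,w))<\tfrac12\log R\}$; closure in $\mathbb{C}^d$. Complete Kobayashi hyperbolic: $(\Omega,\mathsf{k}_\Omega)$ is Cauchy complete. A geodesic ray is a map $\gamma:[0,\infty)\to\Omega$ with $\mathsf{k}_\Omega(\gamma(s),\gamma(t))=|s-t|$ for all $s,t\ge0$. *)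

theory Defs
  imports "HOL-Analysis.Analysis"
begin

text \<open>Points of C^d are vectors complex^'n, with 'n a finite index type (d = CARD('n)).\<close>

definition domain :: "(complex^'n) set \<Rightarrow> bool" where
  "domain \<Omega> \<longleftrightarrow> open \<Omega> \<and> connected \<Omega> \<and> \<Omega> \<noteq> {}"

definition analytic_discs :: "(complex^'n) set \<Rightarrow> (complex \<Rightarrow> complex^'n) set" where
  "analytic_discs \<Omega> = {f. (\<forall>i. (\<lambda>\<zeta>. f \<zeta> $ i) holomorphic_on ball 0 1) \<and> f ` ball 0 1 \<subseteq> \<Omega>}"

text \<open>Kobayashi--Lempert function; Poincare distance on the disc
  k_D(0,zeta) = artanh |zeta| = (1/2) log((1+|zeta|)/(1-|zeta|)).\<close>
definition lempert :: "(complex^'n) set \<Rightarrow> complex^'n \<Rightarrow> complex^'n \<Rightarrow> real" where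
  "lempert \<Omega> z w = Inf {artanh (cmod \<zeta>) | \<zeta> f. \<zeta> \<in> ball 0 1 \<and> f \<in> analytic_discs \<Omega> \<and> f 0 = z \<and> f \<zeta> = w}"

definition kobayashi :: "(complex^'n) set \<Rightarrow> complex^'n \<Rightarrow> complex^'n \<Rightarrow> real" where
  "kobayashi \<Omega> z w = Inf {(\<Sum>i<m. lempert \<Omega> (p i) (p (Suc i))) | m p.
      p 0 = z \<and> p m = w \<and> (\<forall>i\<le>m. p i \<in> \<Omega>)}"

definition kobayashi_hyperbolic :: "(complex^'n) set \<Rightarrow> bool" where
  "kobayashi_hyperbolic \<Omega> \<longleftrightarrow>
     (\<forall>z\<in>\<Omega>. \<forall>w\<in>\<Omega>. z \<noteq> w \<longrightarrow> kobayashi \<Omega> z w > 0)"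

definition complete_kobayashi_hyperbolic :: "(complex^'n) set \<Rightarrow> bool" where
  "complete_kobayashi_hyperbolic \<Omega> \<longleftrightarrow> kobayashi_hyperbolic \<Omega> \<and>
     (\<forall>\<sigma>. (\<forall>n. \<sigma> n \<in> \<Omega>) \<and>
          (\<forall>e>0. \<exists>N. \<forall>m\<ge>N. \<forall>n\<ge>N. kobayashi \<Omega> (\<sigma> m) (\<sigma> n) < e)
        \<longrightarrow> (\<exists>p\<in>\<Omega>. (\<lambda>n. kobayashi \<Omega> (\<sigma> n) p) \<longlonglongrightarrow> 0))"

definition geodesic_ray :: "(complex^'n) set \<Rightarrow> (real \<Rightarrow> complex^'n) \<Rightarrow> bool" where
  "geodesic_ray \<Omega> \<gamma> \<longleftrightarrow> (\<forall>t\<ge>0. \<gamma> t \<in> \<Omega>) \<and>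
     (\<forall>s\<ge>0. \<forall>t\<ge>0. kobayashi \<Omega> (\<gamma> s) (\<gamma> t) = \<bar>s - t\<bar>)"

definition big_horoball :: "(complex^'n) set \<Rightarrow> complex^'n \<Rightarrow> complex^'n \<Rightarrow> real \<Rightarrow> (complex^'n) set" where
  "big_horoball \<Omega> b x R = {z \<in> \<Omega>.
     Liminf (at x within \<Omega>) (\<lambda>w. ereal (kobayashi \<Omega> z w - kobayashi \<Omega> b w)) < ereal (ln R / 2)}"

end

theory Submission imports Defs "HOL-Complex_Analysis.Riemann_Mapping" begin

lemma sum_split_add: "(\<Sum>i<m+n. f i) = (\<Sum>i<m. f i) + (\<Sum>i<n. f (m+i)::real)" for m n :: nat
  by (induction n) (auto simp: add.assoc)

lemma artanh_nonneg': "0 \<le> x \<Longrightarrow> x < 1 \<Longrightarrow> 0 \<le> artanh (x::real)"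
  unfolding artanh_def by (auto intro!: ln_ge_zero simp: field_simps)

lemma Inf_unbdd_real: assumes "\<not> bdd_below (X::real set)" shows "Inf X = Inf ({}::real set)"
proof -
  have 1: "(\<lambda>z. \<forall>x\<in>uminus ` X. x \<le> z) = (\<lambda>z. False)"
  proof
    fix z show "(\<forall>x\<in>uminus ` X. x \<le> z) = False"
      using assms unfolding bdd_below_def by (auto, metis minus_le_iff)
  qed
  have 2: "(\<lambda>z::real. \<forall>x\<in>uminus ` {}. x \<le> z) = (\<lambda>z. True)" by auto
  have e: "(\<lambda>x::real. True \<and> (\<forall>y. True \<longrightarrow> x \<le> y)) = (\<lambda>x. False \<and> (\<forall>y. False \<longrightarrow> x \<le> y))"
  proof
    fix x :: real show "(True \<and> (\<forall>y. True \<longrightarrow> x \<le> y)) = (False \<and> (\<forall>y. False \<longrightarrow> x \<le> y))"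
      by (auto intro!: exI[of _ "x - 1"])
  qed
  have 3: "(LEAST z::real. True) = (LEAST z::real. False)"
    unfolding Least_def e ..
  show ?thesis unfolding Inf_real_def Sup_real_def 1 2 3 ..
qed

lemma disc_swap:
  assumes f: "f \<in> analytic_discs \<Omega>" and z: "\<zeta> \<in> ball 0 1"
  shows "\<exists>g\<in>analytic_discs \<Omega>. g 0 = f \<zeta> \<and> g \<zeta> = f 0"
proof -
  define \<phi> where "\<phi> = (\<lambda>\<eta>. - Moebius_function 0 \<zeta> \<eta>)"
  have n: "norm \<zeta> < 1" using z by auto
  have hol: "\<phi> holomorphic_on ball 0 1" unfolding \<phi>_def
    by (intro holomorphic_intros Moebius_function_holomorphic n)
  have img: "\<phi> ` ball 0 1 \<subseteq> ball 0 1" unfolding \<phi>_def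
    using Moebius_function_norm_lt_1[OF n] by auto
  have p0: "\<phi> 0 = \<zeta>" unfolding \<phi>_def by (simp add: Moebius_function_of_zero)
  have pz: "\<phi> \<zeta> = 0" unfolding \<phi>_def by (simp add: Moebius_function_eq_zero)
  show ?thesis
  proof (intro bexI[of _ "f \<circ> \<phi>"] conjI)
    have "(\<lambda>\<eta>. (f \<circ> \<phi>) \<eta> $ i) holomorphic_on ball 0 1" for i
    proof -
      have "(\<lambda>\<zeta>. f \<zeta> $ i) holomorphic_on ball 0 1" using f unfolding analytic_discs_def by auto
      from holomorphic_on_compose_gen[OF hol this img] show ?thesis by (simp add: o_def)
    qed
    moreover have "(f \<circ> \<phi>) ` ball 0 1 \<subseteq> \<Omega>"
      using f img unfolding analytic_discs_def by (auto simp: image_subset_iff)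
    ultimately show "f \<circ> \<phi> \<in> analytic_discs \<Omega>" unfolding analytic_discs_def by auto
  qed (auto simp: p0 pz)
qed

lemma lempert_nonneg:
  assumes geo: "geodesic_ray \<Omega> \<gamma>" and z: "z \<in> \<Omega>" and w: "w \<in> \<Omega>"
  shows "0 \<le> lempert \<Omega> z w"
proof -
  define S where "S = (\<lambda>z w. {artanh (cmod \<zeta>) | \<zeta> f. \<zeta> \<in> ball 0 1 \<and> f \<in> analytic_discs \<Omega> \<and> f 0 = z \<and> f \<zeta> = w})"
  have L: "lempert \<Omega> a c = Inf (S a c)" for a c unfolding lempert_def S_def by simp
  have nonneg_ne: "0 \<le> lempert \<Omega> a c" if "S a c \<noteq> {}" for a c
    unfolding L using that
    by (intro cInf_greatest) (auto simp: S_def intro!: artanh_nonneg')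
  show ?thesis
  proof (cases "S z w = {}")
    case False then show ?thesis by (rule nonneg_ne)
  next
    case True
    define c where "c = Inf ({}::real set)"
    have Lzw: "lempert \<Omega> z w = c" using True unfolding L c_def by simp
    have "S w z = {}"
    proof (rule ccontr)
      assume "S w z \<noteq> {}"
      then obtain \<zeta> f where "\<zeta> \<in> ball 0 1" "f \<in> analytic_discs \<Omega>" "f 0 = w" "f \<zeta> = z"
        unfolding S_def by auto
      from disc_swap[OF this(2,1)] this obtain g where "g \<in> analytic_discs \<Omega>" "g 0 = z" "g \<zeta> = w"
        by auto
      with \<open>\<zeta> \<in> ball 0 1\<close> have "artanh (cmod \<zeta>) \<in> S z w" unfolding S_def by blast
      with True show False by auto
    qed
    hence Lwz: "lempert \<Omega> w z = c" unfolding L c_def by simp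
    show ?thesis
    proof (rule ccontr)
      assume neg: "\<not> 0 \<le> lempert \<Omega> z w"
      hence cneg: "c < 0" using Lzw by simp
      have g0: "\<gamma> 0 \<in> \<Omega>" using geo unfolding geodesic_ray_def by auto
      have k00: "kobayashi \<Omega> (\<gamma> 0) (\<gamma> 0) = 0" using geo unfolding geodesic_ray_def by auto
      define C where "C = {(\<Sum>i<m. lempert \<Omega> (p i) (p (Suc i))) | m p.
        p 0 = \<gamma> 0 \<and> p m = \<gamma> 0 \<and> (\<forall>i\<le>m. p i \<in> \<Omega>)}"
      define a where "a = lempert \<Omega> (\<gamma> 0) z + lempert \<Omega> w (\<gamma> 0)"
      have inC: "a + real (2*n+1) * c \<in> C" for n
      proof -
        define p where "p = (\<lambda>i. if i = 0 \<or> i = 2*n+3 then \<gamma> 0 else if odd i then z else w)"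
        have mid: "lempert \<Omega> (p (Suc i)) (p (Suc (Suc i))) = c" if "i < 2*n+1" for i
          using that Lzw Lwz unfolding p_def by auto
        define g where "g = (\<lambda>i. lempert \<Omega> (p i) (p (Suc i)))"
        have s1: "(\<Sum>i<Suc (Suc (2*n+1)). g i) = (\<Sum>i<Suc (2*n+1). g i) + g (Suc (2*n+1))"
          by (rule sum.lessThan_Suc)
        have s2: "(\<Sum>i<Suc (2*n+1). g i) = g 0 + (\<Sum>i<2*n+1. g (Suc i))"
          by (rule sum.lessThan_Suc_shift)
        have "(\<Sum>i<Suc (Suc (2*n+1)). lempert \<Omega> (p i) (p (Suc i)))
            = lempert \<Omega> (p 0) (p 1) + (\<Sum>i<2*n+1. lempert \<Omega> (p (Suc i)) (p (Suc (Suc i))))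
              + lempert \<Omega> (p (2*n+2)) (p (2*n+3))"
          using s1 s2 unfolding g_def by (simp add: numeral_eq_Suc)
        also have "\<dots> = a + real (2*n+1) * c"
          using mid by (simp add: p_def a_def)
        finally have eq: "(\<Sum>i<2*n+3. lempert \<Omega> (p i) (p (Suc i))) = a + real (2*n+1) * c"
          by (simp add: numeral_eq_Suc)
        have "p 0 = \<gamma> 0" "p (2*n+3) = \<gamma> 0" "\<forall>i\<le>2*n+3. p i \<in> \<Omega>"
          using g0 z w by (auto simp: p_def)
        with eq show ?thesis unfolding C_def
          by (intro CollectI exI[of _ "2*n+3"] exI[of _ p]) auto
      qed
      have "\<not> bdd_below C"
      proof
        assume "bdd_below C"
        then obtain B where B: "\<And>x. x \<in> C \<Longrightarrow> B \<le> x" unfolding bdd_below_def by auto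
        obtain n :: nat where n: "(a - B) / (- c) < real n" using reals_Archimedean2 by blast
        have "B \<le> a + real (2*n+1) * c" using B inC by blast
        moreover have "(a - B) < real n * (- c)" using n cneg by (simp add: field_simps)
        ultimately show False using cneg by (simp add: algebra_simps) (smt (verit) mult_left_mono_neg of_nat_0_le_iff)
      qed
      hence "kobayashi \<Omega> (\<gamma> 0) (\<gamma> 0) = c"
        unfolding kobayashi_def C_def[symmetric] c_def by (rule Inf_unbdd_real)
      with k00 cneg show False by simp
    qed
  qed
qed

lemma kob_triangle:
  assumes geo: "geodesic_ray \<Omega> \<gamma>" and z: "z \<in> \<Omega>" and u: "u \<in> \<Omega>" and w: "w \<in> \<Omega>"
  shows "kobayashi \<Omega> z w \<le> kobayashi \<Omega> z u + kobayashi \<Omega> u w"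
proof -
  define Ch where "Ch = (\<lambda>a b. {(\<Sum>i<m. lempert \<Omega> (p i) (p (Suc i))) | m p.
      p 0 = a \<and> p m = b \<and> (\<forall>i\<le>m. p i \<in> \<Omega>)})"
  have K: "kobayashi \<Omega> a b = Inf (Ch a b)" for a b unfolding kobayashi_def Ch_def by simp
  have ne: "Ch a b \<noteq> {}" if "a \<in> \<Omega>" "b \<in> \<Omega>" for a b
  proof -
    define p where "p = (\<lambda>i::nat. if i = 0 then a else b)"
    have "(\<Sum>i<1. lempert \<Omega> (p i) (p (Suc i))) \<in> Ch a b"
      unfolding Ch_def using that by (auto simp: p_def intro!: exI[of _ 1] exI[of _ p])
    thus ?thesis by blast
  qed
  have bdd: "bdd_below (Ch a b)" for a b
    unfolding Ch_def bdd_below_def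
    by (auto intro!: exI[of _ 0] sum_nonneg lempert_nonneg[OF geo])
  have main: "Inf (Ch z w) \<le> x + y" if x: "x \<in> Ch z u" and y: "y \<in> Ch u w" for x y
  proof -
    from x obtain m1 p where p: "x = (\<Sum>i<m1. lempert \<Omega> (p i) (p (Suc i)))" "p 0 = z" "p m1 = u"
      "\<forall>i\<le>m1. p i \<in> \<Omega>" unfolding Ch_def by blast
    from y obtain m2 q where q: "y = (\<Sum>i<m2. lempert \<Omega> (q i) (q (Suc i)))" "q 0 = u" "q m2 = w"
      "\<forall>i\<le>m2. q i \<in> \<Omega>" unfolding Ch_def by blast
    define r where "r = (\<lambda>i. if i \<le> m1 then p i else q (i - m1))"
    have r1: "(\<Sum>i<m1. lempert \<Omega> (r i) (r (Suc i))) = x"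
      unfolding p(1) by (rule sum.cong) (auto simp: r_def)
    have r2: "(\<Sum>i<m2. lempert \<Omega> (r (m1+i)) (r (Suc (m1+i)))) = y"
      unfolding q(1) by (rule sum.cong) (auto simp: r_def p q Suc_diff_le)
    have "(\<Sum>i<m1+m2. lempert \<Omega> (r i) (r (Suc i))) = x + y"
      by (simp only: sum_split_add r1 r2)
    moreover have "r 0 = z" "r (m1+m2) = w" "\<forall>i\<le>m1+m2. r i \<in> \<Omega>"
      using p q by (auto simp: r_def)
    ultimately have "x + y \<in> Ch z w" unfolding Ch_def
      by (intro CollectI exI[of _ "m1+m2"] exI[of _ r]) auto
    thus ?thesis by (rule cInf_lower[OF _ bdd])
  qed
  have "Inf (Ch z w) - Inf (Ch u w) \<le> Inf (Ch z u)"
  proof -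
    have "Inf (Ch z w) - Inf (Ch u w) \<le> x" if "x \<in> Ch z u" for x
    proof -
      have "Inf (Ch z w) - x \<le> Inf (Ch u w)"
        by (rule cInf_greatest[OF ne[OF u w]]) (use main that in force)
      thus ?thesis by simp
    qed
    thus ?thesis by (intro cInf_greatest[OF ne[OF z u]]) auto
  qed
  thus ?thesis unfolding K by simp
qed

lemma main_closure:
  fixes \<Omega> :: "(complex^'n) set" and \<gamma> :: "real \<Rightarrow> complex^'n"
    and x y :: "complex^'n" and t s :: "nat \<Rightarrow> real"
  assumes dom: "domain \<Omega>" and geo: "geodesic_ray \<Omega> \<gamma>"
    and xf: "x \<in> frontier \<Omega>"
    and tt: "filterlim t at_top sequentially" and st: "filterlim s at_top sequentially"
    and tx: "(\<lambda>n. \<gamma> (t n)) \<longlonglongrightarrow> x" and sy: "(\<lambda>n. \<gamma> (s n)) \<longlonglongrightarrow> y"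
    and R: "R > 0" and b: "b \<in> \<Omega>"
  shows "y \<in> closure (big_horoball \<Omega> b x R)"
proof -
  have opn: "open \<Omega>" using dom unfolding domain_def by auto
  have xn: "x \<notin> \<Omega>" using xf opn by (simp add: frontier_def interior_open)
  have gin: "\<And>r. r \<ge> 0 \<Longrightarrow> \<gamma> r \<in> \<Omega>" using geo unfolding geodesic_ray_def by auto
  have gd: "\<And>a c. a \<ge> 0 \<Longrightarrow> c \<ge> 0 \<Longrightarrow> kobayashi \<Omega> (\<gamma> a) (\<gamma> c) = \<bar>a - c\<bar>"
    using geo unfolding geodesic_ray_def by auto
  define K where "K = kobayashi \<Omega> (\<gamma> 0) b"
  have ev_t: "eventually (\<lambda>m. t m \<ge> r) sequentially" for r
    using tt by (simp add: filterlim_at_top)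
  have lim_at: "filterlim (\<lambda>m. \<gamma> (t m)) (at x within \<Omega>) sequentially"
  proof (rule filterlim_at_withinI[OF tx])
    show "eventually (\<lambda>m. \<gamma> (t m) \<in> \<Omega> - {x}) sequentially"
      using ev_t[of 0] by eventually_elim (use gin xn in auto)
  qed
  have inH: "\<gamma> r \<in> big_horoball \<Omega> b x R" if r: "r \<ge> 0" "K - r < ln R / 2" for r
  proof -
    define f where "f = (\<lambda>w. ereal (kobayashi \<Omega> (\<gamma> r) w - kobayashi \<Omega> b w))"
    have "Liminf (at x within \<Omega>) f \<le> ereal (K - r)"
    proof (rule Liminf_least)
      fix P assume P: "eventually P (at x within \<Omega>)"
      have "eventually (\<lambda>m. P (\<gamma> (t m))) sequentially"
        using lim_at P by (simp add: filterlim_iff)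
      moreover note ev_t[of r]
      ultimately have "eventually (\<lambda>m. P (\<gamma> (t m)) \<and> t m \<ge> r) sequentially"
        by eventually_elim auto
      then obtain m where m: "P (\<gamma> (t m))" "t m \<ge> r" by (auto dest: eventually_happens)
      have tm0: "t m \<ge> 0" using m r by linarith
      have w: "\<gamma> (t m) \<in> \<Omega>" using gin tm0 .
      have "kobayashi \<Omega> (\<gamma> 0) (\<gamma> (t m)) \<le> K + kobayashi \<Omega> b (\<gamma> (t m))"
        unfolding K_def by (rule kob_triangle[OF geo gin[of 0] b w]) simp
      moreover have "kobayashi \<Omega> (\<gamma> 0) (\<gamma> (t m)) = t m" using gd[of 0 "t m"] tm0 by simp
      moreover have "kobayashi \<Omega> (\<gamma> r) (\<gamma> (t m)) = t m - r" using gd[of r "t m"] tm0 r m by simp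
      ultimately have "f (\<gamma> (t m)) \<le> ereal (K - r)" unfolding f_def by simp
      thus "(INF w\<in>Collect P. f w) \<le> ereal (K - r)"
        using m(1) by (intro INF_lower2[of "\<gamma> (t m)"]) auto
    qed
    also have "\<dots> < ereal (ln R / 2)" using r by simp
    finally show ?thesis unfolding big_horoball_def f_def using gin[OF r(1)] by simp
  qed
  have "eventually (\<lambda>n. s n \<ge> max 0 (K - ln R / 2 + 1)) sequentially"
    using st unfolding filterlim_at_top by blast
  hence "eventually (\<lambda>n. \<gamma> (s n) \<in> closure (big_horoball \<Omega> b x R)) sequentially"
    by eventually_elim (use inH closure_subset in force)
  thus ?thesis by (rule Lim_in_closed_set[OF closed_closure _ _ sy]) simp
qed

theorem lemma3p3:
  fixes \<Omega> :: "(complex^'n) set" and \<gamma> :: "real \<Rightarrow> complex^'n"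
    and x y :: "complex^'n" and t s :: "nat \<Rightarrow> real"
  assumes "domain \<Omega>" and "complete_kobayashi_hyperbolic \<Omega>"
    and "geodesic_ray \<Omega> \<gamma>"
    and "x \<in> frontier \<Omega>" and "y \<in> frontier \<Omega>"
    and "filterlim t at_top sequentially" and "filterlim s at_top sequentially"
    and "(\<lambda>n. \<gamma> (t n)) \<longlonglongrightarrow> x" and "(\<lambda>n. \<gamma> (s n)) \<longlonglongrightarrow> y"
  shows "(\<forall>R>0. \<forall>b\<in>\<Omega>. y \<in> closure (big_horoball \<Omega> b x R))
       \<and> (\<forall>R>0. \<forall>b\<in>\<Omega>. x \<in> closure (big_horoball \<Omega> b x R))"
    using main_closure[OF assms(1,3,4,6,7,8,9)] main_closure[OF assms(1,3,4,6,6,8,8)] by blast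

end
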